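(* For every basic patterns (graphs) $P_1$ and $P_2$, the basic pattern $P_1\cup P_2$ is equivalent to the pattern $P_1\ \mathrm{JOIN}\ P_2$ and to the pattern $P_2\ \mathrm{JOIN}\ P_1$; that is, for every graph $G$ the three patterns have the same value over $G$.
   Context: Labels $\mathcal{L}$ are the disjoint union of constants $\mathcal{C}$ and variables $\mathcal{V}$. A graph $X$ consists of a set of nodes $X_N\subseteq\mathcal{L}$ and a set of triples $X_T\subseteq\mathcal{L}^3$ whose subjects and objects are nodes (isolated nodes allowed); its labels $\mathcal{L}(X)$ are its nodes and predicates, $\mathcal{V}(X)=\mathcal{V}\cap\mathcal{L}(X)$; the union $X_1\cup X_2$ is componentwise union of nodes and triples. A match $m:X\to G$ is a function $\mathcal{L}(X)\to\mathcal{L}(G)$ mapping nodes to nodes, triples (componentwise) to triples, and fixing every constant; a set of matches all from $X$ to $G$ is written $\underline{m}:X\Rightarrow G$ (a set of matches is determined by its domain graph, codomain graph and underlying functions). Two matches $m_1:X_1\to G_1$, $m_2:X_2\to G_2$ are compatible if they agree on $\mathcal{V}(X_1)\cap\mathcal{V}(X_2)$, and then $m_1\bowtie m_2:X_1\cup X_2\to G_1\cup G_2$ is the match agreeing with $m_1$ on $\mathcal{L}(X_1)$ and $m_2$ on $\mathcal{L}(X_2)$. For $\underline{m}:X\Rightarrow G$ and $\underline{p}:Y\Rightarrow H$, $\mathrm{Join}(\underline{m},\underline{p})=\{m\bowtie p\mid m\in\underline{m},p\in\underline{p},m\text{ and }p\text{ compatible}\}:X\cup Y\Rightarrow G\cup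 H$. The value of a basic pattern (graph) $P$ over a graph $G$ is the set of all matches from $P$ to $G$, as a set of matches $P\Rightarrow G$. The value of $P_1\ \mathrm{JOIN}\ P_2$ over $G$ is $\mathrm{Join}(\underline{m}_1,\underline{m}_2)$ where $\underline{m}_1:X_1\Rightarrow G_1$ is the value of $P_1$ over $G$ and $\underline{m}_2$ is the value of $P_2$ over $G_1$. Two patterns are equivalent if they have the same value (same set of matches with same domain and codomain graphs) over every graph $G$. *)

theory Defs
  imports Main
begin

datatype ('c, 'v) label = Cst 'c | Var 'v

definition is_var :: "('c, 'v) label \<Rightarrow> bool" where
  "is_var l = (\<exists>v. l = Var v)"

record ('c, 'v) graph =
  nodes :: "('c, 'v) label set"
  triples :: "(('c, 'v) label \<times> ('c, 'v) label \<times> ('c, 'v) label) set"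

definition wf_graph :: "('c, 'v) graph \<Rightarrow> bool" where
  "wf_graph X = (\<forall>s p t. (s, p, t) \<in> triples X \<longrightarrow> s \<in> nodes X \<and> t \<in> nodes X)"

definition labels :: "('c, 'v) graph \<Rightarrow> ('c, 'v) label set" where
  "labels X = nodes X \<union> {p. \<exists>s t. (s, p, t) \<in> triples X}"

definition vars :: "('c, 'v) graph \<Rightarrow> ('c, 'v) label set" where
  "vars X = {l \<in> labels X. is_var l}"

definition graph_union :: "('c, 'v) graph \<Rightarrow> ('c, 'v) graph \<Rightarrow> ('c, 'v) graph" where
  "graph_union X Y = \<lparr>nodes = nodes X \<union> nodes Y, triples = triples X \<union> triples Y\<rparr>"

type_synonym ('c, 'v) lmap = "('c, 'v) label \<Rightarrow> ('c, 'v) label option"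

definition is_match :: "('c, 'v) graph \<Rightarrow> ('c, 'v) graph \<Rightarrow> ('c, 'v) lmap \<Rightarrow> bool" where
  "is_match X G m \<longleftrightarrow>
     dom m = labels X \<and>
     (\<forall>n \<in> nodes X. \<exists>n'. m n = Some n' \<and> n' \<in> nodes G) \<and>
     (\<forall>s p t. (s, p, t) \<in> triples X \<longrightarrow>
        (\<exists>s' p' t'. m s = Some s' \<and> m p = Some p' \<and> m t = Some t' \<and> (s', p', t') \<in> triples G)) \<and>
     (\<forall>c. Cst c \<in> labels X \<longrightarrow> m (Cst c) = Some (Cst c))"

record ('c, 'v) mset =
  mdom :: "('c, 'v) graph"
  mcod :: "('c, 'v) graph"
  mfuns :: "('c, 'v) lmap set"

definition compatible :: "('c, 'v) graph \<Rightarrow> ('c, 'v) lmap \<Rightarrow> ('c, 'v) graph \<Rightarrow> ('c, 'v) lmap \<Rightarrow> bool" where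
  "compatible X1 m1 X2 m2 = (\<forall>l \<in> vars X1 \<inter> vars X2. m1 l = m2 l)"

definition match_join :: "('c, 'v) graph \<Rightarrow> ('c, 'v) lmap \<Rightarrow> ('c, 'v) lmap \<Rightarrow> ('c, 'v) lmap" where
  "match_join X1 m1 m2 = (\<lambda>l. if l \<in> labels X1 then m1 l else m2 l)"

definition Join :: "('c, 'v) mset \<Rightarrow> ('c, 'v) mset \<Rightarrow> ('c, 'v) mset" where
  "Join M P = \<lparr>mdom = graph_union (mdom M) (mdom P),
               mcod = graph_union (mcod M) (mcod P),
               mfuns = {match_join (mdom M) m p | m p.
                          m \<in> mfuns M \<and> p \<in> mfuns P \<and> compatible (mdom M) m (mdom P) p}\<rparr>"

datatype ('c, 'v) pattern = Basic "('c, 'v) graph" | JOIN "('c, 'v) pattern" "('c, 'v) pattern"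

fun pvalue :: "('c, 'v) pattern \<Rightarrow> ('c, 'v) graph \<Rightarrow> ('c, 'v) mset" where
  "pvalue (Basic P) G = \<lparr>mdom = P, mcod = G, mfuns = {m. is_match P G m}\<rparr>"
| "pvalue (JOIN P1 P2) G =
     (let M1 = pvalue P1 G in Join M1 (pvalue P2 (mcod M1)))"

definition pat_equiv :: "('c, 'v) pattern \<Rightarrow> ('c, 'v) pattern \<Rightarrow> bool" where
  "pat_equiv P Q = (\<forall>G. wf_graph G \<longrightarrow> pvalue P G = pvalue Q G)"

end

theory Submission
  imports Defs
begin

lemma labels_union: "labels (graph_union X Y) = labels X \<union> labels Y"
  by (auto simp: labels_def graph_union_def)

lemma graph_union_self: "graph_union (G::('c,'v) graph) G = G"
  by (simp add: graph_union_def)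

lemma graph_union_comm: "graph_union X Y = graph_union Y X"
  by (auto simp: graph_union_def)

lemma restrict_match:
  assumes f: "is_match (graph_union X Y) G f" and w: "wf_graph X"
  shows "is_match X G (f |` labels X)"
proof -
  have lab: "s \<in> labels X \<and> q \<in> labels X \<and> t \<in> labels X" if "(s,q,t) \<in> triples X" for s q t
    using w that by (auto simp: wf_graph_def labels_def)
  have nl: "n \<in> labels X" if "n \<in> nodes X" for n using that by (simp add: labels_def)
  have df: "dom f = labels X \<union> labels Y" using f by (simp add: is_match_def labels_union)
  show ?thesis unfolding is_match_def
  proof (intro conjI allI impI ballI)
    show "dom (f |` labels X) = labels X" using df by auto
  next
    fix n assume n: "n \<in> nodes X"
    then have "n \<in> nodes (graph_union X Y)" by (simp add: graph_union_def)
    then obtain n' where "f n = Some n'" "n' \<in> nodes G" using f unfolding is_match_def by blast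
    then show "\<exists>n'. (f |` labels X) n = Some n' \<and> n' \<in> nodes G" using nl[OF n] by auto
  next
    fix s q t assume tr: "(s, q, t) \<in> triples X"
    then have "(s, q, t) \<in> triples (graph_union X Y)" by (simp add: graph_union_def)
    then obtain s' p' t' where "f s = Some s'" "f q = Some p'" "f t = Some t'" "(s', p', t') \<in> triples G"
      using f unfolding is_match_def by blast
    then show "\<exists>s' p' t'. (f |` labels X) s = Some s' \<and> (f |` labels X) q = Some p' \<and>
        (f |` labels X) t = Some t' \<and> (s', p', t') \<in> triples G" using lab[OF tr] by auto
  next
    fix c assume "Cst c \<in> labels X"
    moreover then have "Cst c \<in> labels (graph_union X Y)" by (simp add: labels_union)
    ultimately show "(f |` labels X) (Cst c) = Some (Cst c)" using f unfolding is_match_def by auto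
  qed
qed

lemma join_match:
  assumes m: "is_match X G m" and p: "is_match Y G p" and c: "compatible X m Y p"
  shows "is_match (graph_union X Y) G (match_join X m p)"
proof -
  have agree: "m l = p l" if "l \<in> labels X" "l \<in> labels Y" for l
  proof (cases l)
    case (Cst c0) then show ?thesis using m p that unfolding is_match_def by auto
  next
    case (Var v) then show ?thesis using c that
      unfolding compatible_def vars_def is_var_def by auto
  qed
  have jp: "match_join X m p l = p l" if "l \<in> labels Y" for l
    using agree that by (auto simp: match_join_def)
  have jm: "match_join X m p l = m l" if "l \<in> labels X" for l
    using that by (auto simp: match_join_def)
  have lx: "s \<in> labels X \<and> q \<in> labels X \<and> t \<in> labels X" if "(s,q,t) \<in> triples X" for s q t
  proof -
    have "dom m = labels X" using m by (simp add: is_match_def)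
    then show ?thesis using that m unfolding is_match_def by blast
  qed
  have ly: "s \<in> labels Y \<and> q \<in> labels Y \<and> t \<in> labels Y" if "(s,q,t) \<in> triples Y" for s q t
  proof -
    have "dom p = labels Y" using p by (simp add: is_match_def)
    then show ?thesis using that p unfolding is_match_def by blast
  qed
  have nx: "n \<in> labels X" if "n \<in> nodes X" for n using that by (auto simp: labels_def)
  have ny: "n \<in> labels Y" if "n \<in> nodes Y" for n using that by (auto simp: labels_def)
  show ?thesis
    unfolding is_match_def
  proof (intro conjI allI impI ballI)
    show "dom (match_join X m p) = labels (graph_union X Y)"
      using m p unfolding is_match_def by (auto simp: labels_union match_join_def dom_def)
  next
    fix n assume "n \<in> nodes (graph_union X Y)"
    then show "\<exists>n'. match_join X m p n = Some n' \<and> n' \<in> nodes G"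
      using m p jm jp nx ny unfolding is_match_def graph_union_def by auto
  next
    fix s q t assume "(s, q, t) \<in> triples (graph_union X Y)"
    then show "\<exists>s' p' t'. match_join X m p s = Some s' \<and> match_join X m p q = Some p' \<and>
        match_join X m p t = Some t' \<and> (s', p', t') \<in> triples G"
      using m p jm jp lx ly unfolding is_match_def graph_union_def
      by (auto simp del: match_join_def) 
  next
    fix c0 assume "Cst c0 \<in> labels (graph_union X Y)"
    then show "match_join X m p (Cst c0) = Some (Cst c0)"
      using m p jm jp unfolding is_match_def labels_union by auto
  qed
qed

lemma join_eq: assumes wx: "wf_graph X" and wy: "wf_graph Y"
  shows "pvalue (JOIN (Basic X) (Basic Y)) G = pvalue (Basic (graph_union X Y)) G"
proof -
  have "{match_join X m p | m p. is_match X G m \<and> is_match Y G p \<and> compatible X m Y p}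
        = {f. is_match (graph_union X Y) G f}" (is "?A = ?B")
  proof
    show "?A \<subseteq> ?B" using join_match by blast
  next
    show "?B \<subseteq> ?A"
    proof
      fix f assume "f \<in> ?B"
      then have f: "is_match (graph_union X Y) G f" by simp
      have mx: "is_match X G (f |` labels X)" using restrict_match f wx by blast
      have my: "is_match Y G (f |` labels Y)"
        using restrict_match[of Y X G f] f graph_union_comm wy by metis
      have c: "compatible X (f |` labels X) Y (f |` labels Y)"
        by (auto simp: compatible_def vars_def)
      have df: "dom f = labels X \<union> labels Y" using f by (simp add: is_match_def labels_union)
      have "match_join X (f |` labels X) (f |` labels Y) = f"
      proof
        fix l show "match_join X (f |` labels X) (f |` labels Y) l = f l"
          using df by (cases "f l") (auto simp: match_join_def restrict_map_def)
      qed
      then show "f \<in> ?A" using mx my c by force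
    qed
  qed
  then show ?thesis by (simp add: Join_def graph_union_self)
qed

theorem proposition3:
  fixes P1 P2 :: "('c, 'v) graph"
  assumes "wf_graph P1" and "wf_graph P2"
  shows "pat_equiv (Basic (graph_union P1 P2)) (JOIN (Basic P1) (Basic P2))
       \<and> pat_equiv (Basic (graph_union P1 P2)) (JOIN (Basic P2) (Basic P1))"
  unfolding pat_equiv_def using join_eq graph_union_comm assms by metis

end
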